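(* Let $R=\mathbb{F}_q+v\mathbb{F}_q+v^2\mathbb{F}_q$ with $v^3=v$, let $C_1,C_2,C_3$ be linear codes of length $n$ over $\mathbb{F}_q$, and let $C=vC_1\oplus(1-v)C_2\oplus(1-v^2)C_3=\{va+(1-v)b+(1-v^2)d: a\in C_1,b\in C_2,d\in C_3\}$ be a linear code over $R$. Then $C$ is cyclic over $R$ if and only if $C_1$, $C_2$ and $C_3$ are cyclic codes of length $n$ over $\mathbb{F}_q$.
   Context: $q$ is a prime power and $R=\mathbb{F}_q[v]/\langle v^3-v\rangle$. A linear code of length $n$ over $R$ is an $R$-submodule of $R^n$. A code $C$ (over $R$ or $\mathbb{F}_q$) is cyclic if $(c_{n-1},c_0,\dots,c_{n-2})\in C$ whenever $(c_0,\dots,c_{n-1})\in C$. *)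

theory Defs
  imports Main
begin

text \<open>The ring R = F[v]/(v^3 - v); an element VR a0 a1 a2 stands for a0 + a1 v + a2 v^2.\<close>
datatype 'a vring = VR 'a 'a 'a

instantiation vring :: (comm_ring_1) comm_ring_1
begin


definition "0 = VR 0 0 0"
definition "1 = VR 1 0 0"
fun plus_vring :: "'a vring \<Rightarrow> 'a vring \<Rightarrow> 'a vring" where
  "plus_vring (VR a0 a1 a2) (VR b0 b1 b2) = VR (a0 + b0) (a1 + b1) (a2 + b2)"
fun minus_vring :: "'a vring \<Rightarrow> 'a vring \<Rightarrow> 'a vring" where
  "minus_vring (VR a0 a1 a2) (VR b0 b1 b2) = VR (a0 - b0) (a1 - b1) (a2 - b2)"
fun uminus_vring :: "'a vring \<Rightarrow> 'a vring" where
  "uminus_vring (VR a0 a1 a2) = VR (- a0) (- a1) (- a2)"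
fun times_vring :: "'a vring \<Rightarrow> 'a vring \<Rightarrow> 'a vring" where
  "times_vring (VR a0 a1 a2) (VR b0 b1 b2) =
     VR (a0 * b0)
        (a0 * b1 + a1 * b0 + a1 * b2 + a2 * b1)
        (a0 * b2 + a1 * b1 + a2 * b0 + a2 * b2)"

instance
proof
  fix a b c :: "'a vring"
  show "a * b * c = a * (b * c)"
    by (cases a; cases b; cases c) (simp add: algebra_simps)
  show "a * b = b * a"
    by (cases a; cases b) (simp add: algebra_simps)
  show "1 * a = a"
    by (cases a) (simp add: one_vring_def)
  show "(a + b) * c = a * c + b * c"
    by (cases a; cases b; cases c) (simp add: algebra_simps)
  show "a + b + c = a + (b + c)"
    by (cases a; cases b; cases c) (simp add: algebra_simps)
  show "a + b = b + a"
    by (cases a; cases b) (simp add: algebra_simps)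
  show "0 + a = a"
    by (cases a) (simp add: zero_vring_def)
  show "- a + a = 0"
    by (cases a) (simp add: zero_vring_def)
  show "a - b = a + - b"
    by (cases a; cases b) simp
  show "(0::'a vring) \<noteq> 1"
    by (simp add: zero_vring_def one_vring_def)
qed

end

definition emb :: "'a::comm_ring_1 \<Rightarrow> 'a vring" where "emb c = VR c 0 0"
definition vv :: "'a::comm_ring_1 vring" where "vv = VR 0 1 0"

definition linear_code :: "nat \<Rightarrow> 'r::comm_ring_1 list set \<Rightarrow> bool" where
  "linear_code n C \<longleftrightarrow> (\<forall>x\<in>C. length x = n) \<and> replicate n 0 \<in> C \<and>
     (\<forall>x\<in>C. \<forall>y\<in>C. map2 (+) x y \<in> C) \<and> (\<forall>r. \<forall>x\<in>C. map ((*) r) x \<in> C)"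

definition cshift :: "'r list \<Rightarrow> 'r list" where
  "cshift c = (if c = [] then [] else last c # butlast c)"

definition cyclic :: "'r list set \<Rightarrow> bool" where
  "cyclic C \<longleftrightarrow> (\<forall>c\<in>C. cshift c \<in> C)"

definition vcomb :: "'a::comm_ring_1 list set \<Rightarrow> 'a list set \<Rightarrow> 'a list set \<Rightarrow> 'a vring list set" where
  "vcomb C1 C2 C3 = {map (\<lambda>(x, y, z). vv * emb x + (1 - vv) * emb y + (1 - vv^2) * emb z)
                        (zip a (zip b d)) | a b d. a \<in> C1 \<and> b \<in> C2 \<and> d \<in> C3}"

end

theory Submission
  imports Defs
begin

definition fvr :: "'a::comm_ring_1 \<Rightarrow> 'a \<Rightarrow> 'a \<Rightarrow> 'a vring" where
  "fvr x y z = VR (y+z) (x-y) (-z)"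

lemma comb_eq: "vv * emb x + (1 - vv) * emb y + (1 - vv^2) * emb z = fvr x y (z::'a::comm_ring_1)"
  by (simp add: vv_def emb_def one_vring_def fvr_def power2_eq_square algebra_simps)

lemma fvr_inj: "fvr x y z = fvr x' y' z' \<Longrightarrow> x = x' \<and> y = y' \<and> (z::'a::comm_ring_1) = z'"
  by (simp add: fvr_def) (metis add_right_cancel diff_add_cancel minus_equation_iff)

definition phi :: "'a::comm_ring_1 list \<Rightarrow> 'a list \<Rightarrow> 'a list \<Rightarrow> 'a vring list" where
  "phi a b d = map (\<lambda>(x, y, z). fvr x y z) (zip a (zip b d))"

lemma vcomb_eq: "vcomb C1 C2 C3 = {phi a b d | a b d. a \<in> C1 \<and> b \<in> C2 \<and> d \<in> C3}"
  unfolding vcomb_def phi_def by (simp add: comb_eq)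

lemma cshift_map: "cshift (map g xs) = map g (cshift xs)"
  by (simp add: cshift_def last_map map_butlast)

lemma cshift_zip: "length a = length b \<Longrightarrow> cshift (zip a b) = zip (cshift a) (cshift b)"
  by (induction a b rule: rev_induct2) (simp_all add: cshift_def)

lemma length_cshift[simp]: "length (cshift c) = length c"
  by (simp add: cshift_def)

lemma cshift_phi: "length a = length b \<Longrightarrow> length b = length d \<Longrightarrow>
   cshift (phi a b d) = phi (cshift a) (cshift b) (cshift d)"
  unfolding phi_def by (simp add: cshift_map cshift_zip)

lemma phi_inj: "length a = n \<Longrightarrow> length b = n \<Longrightarrow> length d = n \<Longrightarrow>
   length a' = n \<Longrightarrow> length b' = n \<Longrightarrow> length d' = n \<Longrightarrow>
   phi a b d = phi a' b' d' \<Longrightarrow> a = a' \<and> b = b' \<and> d = d'"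
proof -
  assume l: "length a = n" "length b = n" "length d = n" "length a' = n" "length b' = n" "length d' = n"
    and e: "phi a b d = phi a' b' d'"
  have "\<And>i. i < n \<Longrightarrow> a!i = a'!i \<and> b!i = b'!i \<and> d!i = d'!i"
  proof -
    fix i assume i: "i < n"
    have "phi a b d ! i = phi a' b' d' ! i" using e by simp
    then have "fvr (a!i) (b!i) (d!i) = fvr (a'!i) (b'!i) (d'!i)"
      using l i by (simp add: phi_def)
    then show "a!i = a'!i \<and> b!i = b'!i \<and> d!i = d'!i" by (rule fvr_inj)
  qed
  then show ?thesis using l by (metis nth_equalityI)
qed

theorem theorem9:
  fixes C1 C2 C3 :: "'a::{finite, field} list set" and n :: nat
  assumes "linear_code n C1" and "linear_code n C2" and "linear_code n C3"
    and "linear_code n (vcomb C1 C2 C3)"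
  shows "cyclic (vcomb C1 C2 C3) \<longleftrightarrow> cyclic C1 \<and> cyclic C2 \<and> cyclic C3"
proof -
  have L1: "\<And>x. x \<in> C1 \<Longrightarrow> length x = n" and Z1: "replicate n 0 \<in> C1"
    using assms(1) by (auto simp: linear_code_def)
  have L2: "\<And>x. x \<in> C2 \<Longrightarrow> length x = n" and Z2: "replicate n 0 \<in> C2"
    using assms(2) by (auto simp: linear_code_def)
  have L3: "\<And>x. x \<in> C3 \<Longrightarrow> length x = n" and Z3: "replicate n 0 \<in> C3"
    using assms(3) by (auto simp: linear_code_def)
  have cz: "cshift (replicate n (0::'a)) = replicate n 0"
    by (cases n) (auto simp: cshift_def replicate_append_same[symmetric])
  have dec: "\<exists>a' b' d'. a' \<in> C1 \<and> b' \<in> C2 \<and> d' \<in> C3 \<and> cshift a = a' \<and> cshift b = b' \<and> cshift d = d'"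
    if cyc: "cyclic (vcomb C1 C2 C3)" and m: "a \<in> C1" "b \<in> C2" "d \<in> C3" for a b d
  proof -
    have "phi a b d \<in> vcomb C1 C2 C3" using m by (auto simp: vcomb_eq)
    then have "cshift (phi a b d) \<in> vcomb C1 C2 C3" using cyc by (simp add: cyclic_def)
    then obtain a' b' d' where m': "a' \<in> C1" "b' \<in> C2" "d' \<in> C3"
      and e: "cshift (phi a b d) = phi a' b' d'" by (auto simp: vcomb_eq)
    have "phi (cshift a) (cshift b) (cshift d) = phi a' b' d'"
      using e m L1 L2 L3 by (simp add: cshift_phi)
    then have "cshift a = a' \<and> cshift b = b' \<and> cshift d = d'"
      using phi_inj[of "cshift a" n "cshift b" "cshift d" a' b' d'] m m' L1 L2 L3 by auto
    then show ?thesis using m' by blast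
  qed
  show ?thesis
  proof
    assume cyc: "cyclic (vcomb C1 C2 C3)"
    have "cyclic C1" unfolding cyclic_def
      using dec[OF cyc _ Z2 Z3] by blast
    moreover have "cyclic C2" unfolding cyclic_def
      using dec[OF cyc Z1 _ Z3] by blast
    moreover have "cyclic C3" unfolding cyclic_def
      using dec[OF cyc Z1 Z2] by blast
    ultimately show "cyclic C1 \<and> cyclic C2 \<and> cyclic C3" by blast
  next
    assume c: "cyclic C1 \<and> cyclic C2 \<and> cyclic C3"
    show "cyclic (vcomb C1 C2 C3)" unfolding cyclic_def
    proof
      fix c0 assume "c0 \<in> vcomb C1 C2 C3"
      then obtain a b d where m: "a \<in> C1" "b \<in> C2" "d \<in> C3" and e: "c0 = phi a b d"
        by (auto simp: vcomb_eq)
      have "cshift c0 = phi (cshift a) (cshift b) (cshift d)"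
        using e m L1 L2 L3 by (simp add: cshift_phi)
      moreover have "cshift a \<in> C1" "cshift b \<in> C2" "cshift d \<in> C3"
        using c m by (auto simp: cyclic_def)
      ultimately show "cshift c0 \<in> vcomb C1 C2 C3" by (auto simp: vcomb_eq)
    qed
  qed
qed

end
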